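(* Let $q$ be a prime power and $L\in\mathbb{F}_q[x]$ a $q$-polynomial of $q$-degree $n\geq2$ such that $L(x)/x$ is irreducible in $\mathbb{F}_q[x]$. Let $E$ be a splitting field of $L$ over $\mathbb{F}_q$ and $V\subseteq E$ the space of roots. For an ordered $\mathbb{F}_q$-basis $v_1,\dots,v_n$ of $V$ let $\epsilon_r:H_{n,r}(\mathbb{F}_q)\to E$, $\epsilon_r(P)=P(v_1,\dots,v_n)$. Then $\epsilon_r$ is not injective for every $r\geq q+1$.
   Context: $H_{n,r}(\mathbb{F}_q)$ is the space of homogeneous polynomials of degree $r$ in $\mathbb{F}_q[x_1,\dots,x_n]$ together with $0$. A $q$-polynomial of $q$-degree $n$ is $\sum_{i=0}^n a_ix^{q^i}$ with $a_n\neq0$. *)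

theory Defs
  imports "HOL-Computational_Algebra.Polynomial" "HOL-Library.Cardinality"
begin

definition is_field_hom :: "('a::field \<Rightarrow> 'e::field) \<Rightarrow> bool" where
  "is_field_hom \<phi> \<longleftrightarrow> \<phi> 1 = 1 \<and> (\<forall>x y. \<phi> (x + y) = \<phi> x + \<phi> y) \<and> (\<forall>x y. \<phi> (x * y) = \<phi> x * \<phi> y)"

definition is_q_polynomial :: "nat \<Rightarrow> nat \<Rightarrow> 'a::field poly \<Rightarrow> bool" where
  "is_q_polynomial q n L \<longleftrightarrow>
     (\<forall>k. coeff L k \<noteq> 0 \<longrightarrow> (\<exists>i\<le>n. k = q ^ i)) \<and> coeff L (q ^ n) \<noteq> 0"

definition root_space :: "('a::field \<Rightarrow> 'e::field) \<Rightarrow> 'a poly \<Rightarrow> 'e set" where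
  "root_space \<phi> L = {x. poly (map_poly \<phi> L) x = 0}"

definition is_subfield :: "'e::field set \<Rightarrow> bool" where
  "is_subfield S \<longleftrightarrow> 0 \<in> S \<and> 1 \<in> S \<and> (\<forall>x\<in>S. \<forall>y\<in>S. x + y \<in> S \<and> x * y \<in> S) \<and>
     (\<forall>x\<in>S. - x \<in> S \<and> inverse x \<in> S)"

text \<open>E (the whole type 'e) is a splitting field of L over the image of \<phi>:
  L splits into linear factors over E and E is generated by \<phi>(F_q) and the roots.\<close>
definition is_splitting_field :: "('a::field \<Rightarrow> 'e::field) \<Rightarrow> 'a poly \<Rightarrow> bool" where
  "is_splitting_field \<phi> L \<longleftrightarrow>
     (\<exists>c xs. map_poly \<phi> L = smult c (\<Prod>x\<leftarrow>xs. [:- x, 1:])) \<and>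
     (\<forall>S. is_subfield S \<and> range \<phi> \<subseteq> S \<and> root_space \<phi> L \<subseteq> S \<longrightarrow> S = UNIV)"

definition is_ordered_basis :: "('a::field \<Rightarrow> 'e::field) \<Rightarrow> 'e set \<Rightarrow> nat \<Rightarrow> (nat \<Rightarrow> 'e) \<Rightarrow> bool" where
  "is_ordered_basis \<phi> V n v \<longleftrightarrow>
     (\<forall>i<n. v i \<in> V) \<and>
     (\<forall>x\<in>V. \<exists>!c::nat \<Rightarrow> 'a. (\<forall>i\<ge>n. c i = 0) \<and> x = (\<Sum>i<n. \<phi> (c i) * v i))"

definition monomials :: "nat \<Rightarrow> nat \<Rightarrow> (nat \<Rightarrow> nat) set" where
  "monomials n r = {m. (\<forall>i\<ge>n. m i = 0) \<and> (\<Sum>i<n. m i) = r}"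

text \<open>H_{n,r}(F_q): homogeneous polynomials of degree r in x_1..x_n together with 0,
  represented by coefficient functions supported on the degree-r monomials.\<close>
definition hom_polys :: "nat \<Rightarrow> nat \<Rightarrow> ((nat \<Rightarrow> nat) \<Rightarrow> 'a::field) set" where
  "hom_polys n r = {P. \<forall>m. m \<notin> monomials n r \<longrightarrow> P m = 0}"

definition eval_hom :: "('a::field \<Rightarrow> 'e::field) \<Rightarrow> nat \<Rightarrow> nat \<Rightarrow> (nat \<Rightarrow> 'e) \<Rightarrow> ((nat \<Rightarrow> nat) \<Rightarrow> 'a) \<Rightarrow> 'e" where
  "eval_hom \<phi> n r v P = (\<Sum>m\<in>monomials n r. \<phi> (P m) * (\<Prod>i<n. v i ^ m i))"

end

theory Submission
  imports Defs "HOL-Library.FuncSet"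
begin

lemma fin_pow_card:
  fixes x :: "'a :: {finite,field}"
  shows "x ^ CARD('a) = x"
proof (cases "x = 0")
  case False
  have "x * (\<Prod>y\<in>UNIV-{0}. x * y) = x * x ^ (card (UNIV :: 'a set) - 1) * \<Prod>(UNIV-{0})"
    by (simp add: prod.distrib mult_ac)
  also have "x * x ^ (card (UNIV :: 'a set) - 1) = x ^ Suc (card (UNIV :: 'a set) - 1)"
    by (subst power_Suc) auto
  also have "Suc (card (UNIV :: 'a set) - 1) = card (UNIV :: 'a set)"
    using finite_UNIV_card_ge_0[where ?'a = 'a] by simp
  also have "(\<Prod>y\<in>UNIV-{0}. x * y) = (\<Prod>y\<in>UNIV-{0}. y)"
    by (rule prod.reindex_bij_witness[of _ "\<lambda>y. y / x" "\<lambda>y. x * y"]) (use False in auto)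
  finally show ?thesis
    by simp
qed (use finite_UNIV_card_ge_0[where ?'a = 'a] in auto)

lemma binom_zero:
  assumes "0 < k" "k < CARD('a::{finite,field})"
  shows "of_nat (CARD('a) choose k) = (0::'a)"
proof -
  define q where "q = CARD('a)"
  define f :: "'a poly" where "f = (\<Sum>i\<in>{1..<q}. monom (of_nat (q choose i)) i)"
  have q1: "q \<ge> 1" unfolding q_def using finite_UNIV_card_ge_0[where ?'a = 'a] by simp
  have roots: "poly f a = 0" for a :: 'a
  proof -
    have "poly f a = (\<Sum>i\<in>{1..<q}. of_nat (q choose i) * a ^ i)"
      unfolding f_def by (simp add: poly_sum poly_monom)
    moreover have "(a + 1) ^ q = (\<Sum>i\<le>q. of_nat (q choose i) * a ^ i)"
      using binomial_ring[of a 1 q] by simp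
    moreover have "{..q} = insert 0 (insert q {1..<q})" using q1 by auto
    ultimately have "(a+1)^q = 1 + a^q + poly f a" using q1 by (simp add: sum.insert)
    moreover have "(a+1)^q = a + 1" "a^q = a" unfolding q_def by (rule fin_pow_card)+
    ultimately show ?thesis by simp
  qed
  have "f = 0"
  proof (rule ccontr)
    assume "f \<noteq> 0"
    hence "card {x. poly f x = 0} \<le> degree f" by (rule card_poly_roots_bound)
    moreover have "degree f \<le> q - 1" unfolding f_def
      by (intro degree_sum_le order.trans[OF degree_monom_le]) auto
    moreover have "{x. poly f x = 0} = UNIV" using roots by auto
    ultimately show False using q1 unfolding q_def by simp
  qed
  hence "coeff f k = 0" by simp
  moreover have "coeff f k = of_nat (q choose k)" unfolding f_def coeff_sum coeff_monom
    using assms q_def by (simp add: sum.delta)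
  ultimately show ?thesis unfolding q_def by simp
qed


lemma hom0: "is_field_hom \<phi> \<Longrightarrow> \<phi> 0 = 0"
  unfolding is_field_hom_def by (metis add_0 add_cancel_right_right)

lemma hom_sum: "is_field_hom \<phi> \<Longrightarrow> \<phi> (sum f A) = (\<Sum>x\<in>A. \<phi> (f x))"
  by (induction A rule: infinite_finite_induct) (auto simp: hom0 is_field_hom_def)

lemma hom_pow: "is_field_hom \<phi> \<Longrightarrow> \<phi> (a ^ k) = \<phi> a ^ k"
  by (induction k) (auto simp: is_field_hom_def)

lemma hom_of_nat: "is_field_hom \<phi> \<Longrightarrow> \<phi> (of_nat k) = of_nat k"
  by (induction k) (auto simp: hom0 is_field_hom_def)

lemma frob_e:
  fixes \<phi> :: "'a::{finite,field} \<Rightarrow> 'e::field"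
  assumes "is_field_hom \<phi>"
  shows "(x + y :: 'e) ^ CARD('a) = x ^ CARD('a) + y ^ CARD('a)"
proof -
  define q where "q = CARD('a)"
  have q1: "q \<ge> 1" unfolding q_def using finite_UNIV_card_ge_0[where ?'a = 'a] by simp
  have "(x + y) ^ q = (\<Sum>k\<le>q. of_nat (q choose k) * x ^ k * y ^ (q - k))"
    by (rule binomial_ring)
  also have "\<dots> = (\<Sum>k\<in>{0,q}. of_nat (q choose k) * x ^ k * y ^ (q - k))"
  proof (intro sum.mono_neutral_right ballI)
    fix k assume "k \<in> {..q} - {0, q}"
    hence k: "k > 0" "k < q" by auto
    have "of_nat (q choose k) = \<phi> (of_nat (q choose k))" using hom_of_nat[OF assms] by simp
    also have "\<dots> = 0" using binom_zero[of k, where 'a='a] k hom0[OF assms] q_def by simp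
    finally show "of_nat (q choose k) * x ^ k * y ^ (q - k) = 0" by simp
  qed auto
  finally show ?thesis using q1 unfolding q_def by (simp add: add_ac)
qed

lemma frob_sum:
  fixes \<phi> :: "'a::{finite,field} \<Rightarrow> 'e::field"
  assumes "is_field_hom \<phi>"
  shows "(sum f A :: 'e) ^ CARD('a) = (\<Sum>x\<in>A. f x ^ CARD('a))"
  by (induction A rule: infinite_finite_induct) (auto simp: frob_e[OF assms] power_0_left)

lemma root_frob:
  fixes \<phi> :: "'a::{finite,field} \<Rightarrow> 'e::field"
  assumes "is_field_hom \<phi>" "x \<in> root_space \<phi> L"
  shows "x ^ CARD('a) \<in> root_space \<phi> L"
proof -
  let ?q = "CARD('a)"
  let ?M = "map_poly \<phi> L"
  have c: "coeff ?M i = \<phi> (coeff L i)" for i by (simp add: coeff_map_poly hom0[OF assms(1)])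
  have "poly ?M (x ^ ?q) = (\<Sum>i\<le>degree ?M. coeff ?M i * (x ^ ?q) ^ i)" by (rule poly_altdef)
  also have "\<dots> = (\<Sum>i\<le>degree ?M. (coeff ?M i * x ^ i) ^ ?q)"
  proof (rule sum.cong[OF refl])
    fix i
    have "coeff ?M i ^ ?q = coeff ?M i" unfolding c hom_pow[OF assms(1), symmetric] fin_pow_card ..
    thus "coeff ?M i * (x ^ ?q) ^ i = (coeff ?M i * x ^ i) ^ ?q"
      by (simp add: power_mult_distrib power_mult[symmetric] mult.commute)
  qed
  also have "\<dots> = (poly ?M x) ^ ?q" by (simp add: frob_sum[OF assms(1)] poly_altdef)
  also have "\<dots> = 0" using assms(2) unfolding root_space_def by simp
  finally show ?thesis unfolding root_space_def by simp
qed


definition mono_ij :: "nat \<Rightarrow> nat \<Rightarrow> nat \<Rightarrow> nat \<Rightarrow> nat \<Rightarrow> nat" where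
  "mono_ij s q i j = (\<lambda>t. (if t = 0 then s else 0) + (if t = i then q else 0) + (if t = j then 1 else 0))"

lemma mono_inj:
  assumes "q \<ge> 2" "mono_ij s q i j = mono_ij s q i' j'"
  shows "i = i' \<and> j = j'"
proof -
  have a: "mono_ij s q i j i = mono_ij s q i' j' i" using assms(2) by simp
  have "i = i'" using a assms(1) unfolding mono_ij_def by (auto split: if_splits)
  moreover have b: "mono_ij s q i j j = mono_ij s q i' j' j" using assms(2) by simp
  ultimately show ?thesis using b unfolding mono_ij_def by (auto split: if_splits)
qed

lemma mono_in:
  assumes "i < n" "j < n" "r = s + q + 1"
  shows "mono_ij s q i j \<in> monomials n r"
proof -
  have n: "0 < n" using assms by auto
  have "(\<Sum>t<n. mono_ij s q i j t) = s + q + 1"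
    unfolding mono_ij_def using assms n by (simp add: sum.distrib)
  moreover have "\<forall>t\<ge>n. mono_ij s q i j t = 0" unfolding mono_ij_def using assms n by auto
  ultimately show ?thesis unfolding monomials_def using assms by auto
qed

lemma mono_prod:
  fixes v :: "nat \<Rightarrow> 'e::field"
  assumes "i < n" "j < n"
  shows "(\<Prod>t<n. v t ^ mono_ij s q i j t) = v 0 ^ s * v i ^ q * v j"
proof -
  have n: "0 < n" using assms by auto
  have "(\<Prod>t<n. v t ^ mono_ij s q i j t) =
     (\<Prod>t<n. (if t = 0 then v t ^ s else 1) * (if t = i then v t ^ q else 1) * (if t = j then v t else 1))"
    unfolding mono_ij_def by (intro prod.cong) (auto simp: power_add)
  also have "\<dots> = v 0 ^ s * v i ^ q * v j" using assms n by (simp add: prod.distrib)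
  finally show ?thesis .
qed

lemma finite_monomials: "finite (monomials n r)"
proof -
  have "monomials n r \<subseteq> (\<lambda>f i. if i < n then f i else 0) ` ({..<n} \<rightarrow>\<^sub>E {..r})"
  proof
    fix m assume m: "m \<in> monomials n r"
    have le: "m i \<le> r" if "i < n" for i
    proof -
      have "m i \<le> (\<Sum>t<n. m t)" using that by (intro member_le_sum) auto
      thus ?thesis using m unfolding monomials_def by auto
    qed
    have "m = (\<lambda>i. if i < n then restrict m {..<n} i else 0)"
      using m unfolding monomials_def by (auto simp: fun_eq_iff)
    moreover have "restrict m {..<n} \<in> {..<n} \<rightarrow>\<^sub>E {..r}" using le by auto
    ultimately show "m \<in> (\<lambda>f i. if i < n then f i else 0) ` ({..<n} \<rightarrow>\<^sub>E {..r})" by blast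
  qed
  thus ?thesis by (rule finite_subset) (intro finite_imageI finite_PiE, auto)
qed

lemma sym_sum:
  fixes f w :: "nat \<Rightarrow> nat \<Rightarrow> 'e::comm_ring"
  assumes "\<And>k j. w k j = w j k"
  shows "(\<Sum>k<n. \<Sum>j<n. f k j * w k j) =
    (\<Sum>k<n. \<Sum>j<n. (if k \<le> j then f k j + (if k < j then f j k else 0) else 0) * w k j)"
proof -
  have "(\<Sum>k<n. \<Sum>j<n. f k j * w k j) =
     (\<Sum>k<n. \<Sum>j<n. (if k \<le> j then f k j * w k j else 0)) + (\<Sum>k<n. \<Sum>j<n. (if j < k then f k j * w k j else 0))"
    by (auto simp add: sum.distrib[symmetric] intro!: sum.cong)
  also have "(\<Sum>k<n. \<Sum>j<n. (if j < k then f k j * w k j else 0)) = (\<Sum>j<n. \<Sum>k<n. (if j < k then f k j * w k j else 0))"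
    by (rule sum.swap)
  also have "\<dots> = (\<Sum>k<n. \<Sum>j<n. (if k < j then f j k * w k j else 0))"
    using assms by (intro sum.cong refl) auto
  also have "(\<Sum>k<n. \<Sum>j<n. (if k \<le> j then f k j * w k j else 0)) + \<dots> =
    (\<Sum>k<n. \<Sum>j<n. (if k \<le> j then f k j + (if k < j then f j k else 0) else 0) * w k j)"
    by (auto simp add: sum.distrib[symmetric] algebra_simps intro!: sum.cong)
  finally show ?thesis .
qed


theorem theorem7p5:
  fixes \<phi> :: "'a::{finite,field} \<Rightarrow> 'e::field"
    and L :: "'a poly" and n r :: nat and v :: "nat \<Rightarrow> 'e"
  assumes "is_field_hom \<phi>"
    and "is_q_polynomial CARD('a) n L"
    and "n \<ge> 2"
    and "irreducible (L div [:0, 1:])"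
    and "is_splitting_field \<phi> L"
    and "is_ordered_basis \<phi> (root_space \<phi> L) n v"
    and "r \<ge> CARD('a) + 1"
  shows "\<not> inj_on (eval_hom \<phi> n r v) (hom_polys n r)"
proof
  assume inj: "inj_on (eval_hom \<phi> n r v) (hom_polys n r)"
  note hom = assms(1)
  define q where "q = CARD('a)"
  have q2: "q \<ge> 2"
  proof -
    have "card {0::'a, 1} \<le> card (UNIV :: 'a set)" by (rule card_mono) auto
    thus ?thesis unfolding q_def by simp
  qed
  define s where "s = r - q - 1"
  have rs: "r = s + q + 1" using assms(7) unfolding s_def q_def by simp
  have "\<forall>i. \<exists>c. i < n \<longrightarrow> v i ^ q = (\<Sum>k<n. \<phi> (c k) * v k)"
  proof
    fix i
    show "\<exists>c. i < n \<longrightarrow> v i ^ q = (\<Sum>k<n. \<phi> (c k) * v k)"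
    proof (cases "i < n")
      case True
      hence "v i \<in> root_space \<phi> L" using assms(6) unfolding is_ordered_basis_def by auto
      hence "v i ^ q \<in> root_space \<phi> L" unfolding q_def by (rule root_frob[OF hom])
      then obtain c where "v i ^ q = (\<Sum>k<n. \<phi> (c k) * v k)"
        using assms(6) unfolding is_ordered_basis_def by blast
      thus ?thesis by blast
    qed auto
  qed
  then obtain C where C: "\<And>i. i < n \<Longrightarrow> v i ^ q = (\<Sum>k<n. \<phi> (C i k) * v k)" by metis
  define S where "S = {..<n} \<times> {..<n}"
  define T where "T = {p \<in> S. fst p \<le> snd p}"
  define Pb where "Pb = (\<lambda>b m. \<Sum>i<n. \<Sum>j<n. if m = mono_ij s q i j then b (i, j) else (0::'a))"
  define w where "w = (\<lambda>k j. v 0 ^ s * v k * v j)"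
  define G where "G = (\<lambda>e. \<Sum>k<n. \<Sum>j<n. (if k \<le> j then \<phi> (e (k, j)) else 0) * w k j)"
  have Pb_at: "Pb b (mono_ij s q i j) = b (i, j)" if "i < n" "j < n" for b i j
  proof -
    have "Pb b (mono_ij s q i j) = (\<Sum>i'<n. \<Sum>j'<n. if i' = i then (if j' = j then b (i', j') else 0) else 0)"
      unfolding Pb_def using mono_inj[OF q2, of s i j] by (intro sum.cong refl) metis
    also have "\<dots> = (\<Sum>i'<n. if i' = i then b (i, j) else 0)"
      using that by (intro sum.cong refl) auto
    also have "\<dots> = b (i, j)" using that by simp
    finally show ?thesis .
  qed
  have Pb_hom: "Pb b \<in> hom_polys n r" for b
    unfolding hom_polys_def Pb_def using mono_in[OF _ _ rs] by (auto intro!: sum.neutral)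
  have Pb_inj: "inj_on Pb (S \<rightarrow>\<^sub>E UNIV)"
  proof (rule inj_onI)
    fix b b' assume b: "b \<in> S \<rightarrow>\<^sub>E UNIV" "b' \<in> S \<rightarrow>\<^sub>E UNIV" and eq: "Pb b = Pb b'"
    show "b = b'"
    proof (rule PiE_ext[OF b])
      fix p assume "p \<in> S"
      then obtain i j where p: "p = (i, j)" "i < n" "j < n" unfolding S_def by auto
      show "b p = b' p" using Pb_at[of i j b] Pb_at[of i j b'] eq p by simp
    qed
  qed
  have eval_Pb: "eval_hom \<phi> n r v (Pb b) \<in> G ` (T \<rightarrow>\<^sub>E UNIV)" for b
  proof -
    define M where "M = monomials n r"
    define d where "d = (\<lambda>k j. \<Sum>i<n. b (i, j) * C i k)"
    define d' where "d' = (\<lambda>p. d (fst p) (snd p) + (if fst p < snd p then d (snd p) (fst p) else 0))"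
    have "eval_hom \<phi> n r v (Pb b) = (\<Sum>m\<in>M. \<Sum>i<n. \<Sum>j<n.
        (if m = mono_ij s q i j then \<phi> (b (i, j)) * (\<Prod>t<n. v t ^ m t) else 0))"
      unfolding eval_hom_def M_def Pb_def
      by (auto simp: hom_sum[OF hom] sum_distrib_right hom0[OF hom] intro!: sum.cong)
    also have "\<dots> = (\<Sum>i<n. \<Sum>j<n. \<Sum>m\<in>M.
        (if m = mono_ij s q i j then \<phi> (b (i, j)) * (\<Prod>t<n. v t ^ m t) else 0))"
      by (subst sum.swap) (rule sum.cong[OF refl], rule sum.swap)
    also have "\<dots> = (\<Sum>i<n. \<Sum>j<n. \<phi> (b (i, j)) * (v 0 ^ s * v i ^ q * v j))"
      by (intro sum.cong refl) (simp add: sum.delta' M_def finite_monomials mono_in[OF _ _ rs] mono_prod)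
    also have "\<dots> = (\<Sum>i<n. \<Sum>j<n. \<Sum>k<n. \<phi> (b (i, j) * C i k) * w k j)"
    proof (intro sum.cong refl)
      fix i j assume i: "i \<in> {..<n}"
      have "\<phi> (b (i, j)) * (v 0 ^ s * v i ^ q * v j) =
         \<phi> (b (i, j)) * (v 0 ^ s * (\<Sum>k<n. \<phi> (C i k) * v k) * v j)" using C i by simp
      also have "\<dots> = (\<Sum>k<n. \<phi> (b (i, j)) * (v 0 ^ s * (\<phi> (C i k) * v k) * v j))"
        unfolding sum_distrib_left sum_distrib_right ..
      also have "\<dots> = (\<Sum>k<n. \<phi> (b (i, j) * C i k) * w k j)"
      proof (intro sum.cong refl)
        fix k
        have "\<phi> (b (i, j) * C i k) = \<phi> (b (i, j)) * \<phi> (C i k)"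
          using hom unfolding is_field_hom_def by blast
        thus "\<phi> (b (i, j)) * (v 0 ^ s * (\<phi> (C i k) * v k) * v j) = \<phi> (b (i, j) * C i k) * w k j"
          unfolding w_def by (simp only: mult_ac)
      qed
      finally show "\<phi> (b (i, j)) * (v 0 ^ s * v i ^ q * v j) = (\<Sum>k<n. \<phi> (b (i, j) * C i k) * w k j)" .
    qed
    also have "\<dots> = (\<Sum>i<n. \<Sum>k<n. \<Sum>j<n. \<phi> (b (i, j) * C i k) * w k j)"
      by (rule sum.cong[OF refl], rule sum.swap)
    also have "\<dots> = (\<Sum>k<n. \<Sum>i<n. \<Sum>j<n. \<phi> (b (i, j) * C i k) * w k j)"
      by (rule sum.swap)
    also have "\<dots> = (\<Sum>k<n. \<Sum>j<n. \<Sum>i<n. \<phi> (b (i, j) * C i k) * w k j)"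
      by (rule sum.cong[OF refl], rule sum.swap)
    also have "\<dots> = (\<Sum>k<n. \<Sum>j<n. \<phi> (d k j) * w k j)"
      unfolding d_def by (simp add: hom_sum[OF hom] sum_distrib_right)
    also have "\<dots> = (\<Sum>k<n. \<Sum>j<n. (if k \<le> j then \<phi> (d k j) + (if k < j then \<phi> (d j k) else 0) else 0) * w k j)"
      by (rule sym_sum) (simp add: w_def mult_ac)
    also have "\<dots> = G (restrict d' T)"
      unfolding G_def d'_def T_def S_def
      by (intro sum.cong refl) (auto simp: hom[unfolded is_field_hom_def] hom0[OF hom])
    finally show ?thesis by auto
  qed
  have finS: "finite S" unfolding S_def by auto
  have TS: "T \<subset> S"
  proof -
    have "(1, 0) \<in> S" "(1, 0) \<notin> T" using assms(3) unfolding S_def T_def by auto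
    thus ?thesis unfolding T_def by blast
  qed
  have cT: "card T < card S" by (rule psubset_card_mono[OF finS TS])
  define A where "A = Pb ` (S \<rightarrow>\<^sub>E UNIV)"
  have cardA: "card A = q ^ card S"
    unfolding A_def card_image[OF Pb_inj] using finS by (simp add: card_PiE q_def)
  have "A \<subseteq> hom_polys n r" unfolding A_def using Pb_hom by auto
  hence "inj_on (eval_hom \<phi> n r v) A" using inj inj_on_subset by blast
  hence "card (eval_hom \<phi> n r v ` A) = q ^ card S" using cardA card_image by metis
  moreover have "eval_hom \<phi> n r v ` A \<subseteq> G ` (T \<rightarrow>\<^sub>E UNIV)" unfolding A_def using eval_Pb by auto
  moreover have "finite T" using TS finS finite_subset by auto
  ultimately have "q ^ card S \<le> card (G ` (T \<rightarrow>\<^sub>E (UNIV::'a set)))"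
    by (metis card_mono finite_PiE finite_imageI finite)
  also have "\<dots> \<le> card (T \<rightarrow>\<^sub>E (UNIV::'a set))" using \<open>finite T\<close> by (intro card_image_le finite_PiE) auto
  also have "\<dots> = q ^ card T" using \<open>finite T\<close> by (simp add: card_PiE q_def)
  finally have "card S \<le> card T" using q2 by (metis power_le_imp_le_exp Suc_1 Suc_le_lessD)
  thus False using cT by simp
qed

end
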